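(* Let $N\ge1$ clients; for each client $i$ let $x^i\in\mathbb{R}^d$ be a random feature vector with $\mathbb{E}[x^ix^{i\top}]=H$ (the same for all $i$), let $\varepsilon^i$ be a real random variable independent of $x^i$ with $\mathbb{E}[\varepsilon^i]=0$, $\mathbb{E}[(\varepsilon^i)^2]=\sigma^2$, and let $w_*^1,\dots,w_*^N\in\mathbb{R}^d$ with $w_*=\frac1N\sum_iw_*^i$. Assume there is $\kappa>0$ such that for all $i$ and all $z\in\mathbb{R}^d$, $\mathbb{E}[\langle z,x^i\rangle^4]\le\kappa\langle z,Hz\rangle^2$. Let $\Theta_i=\mathbb{E}[g_*^i(g_*^i)^\top]$ with $g_*^i=(x^ix^{i\top})(w_*-w_*^i)+x^i\varepsilon^i$, and let $W_*$ be uniform on $\{w_*^i:i\in\{1,\dots,N\}\}$, so $\mathrm{Cov}(W_* )=\frac1N\sum_i(w_*-w_*^i)(w_*-w_*^i)^\top$. Then $$\frac1N\sum_{i=1}^N\Theta_i\preccurlyeq\big(\kappa\,\mathrm{Tr}(H\,\mathrm{Cov}(W_* ))+\sigma^2\big)H.$$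
   Context: $A\preccurlyeq B$ means $B-A$ is positive semi-definite. *)

theory Defs
  imports "HOL-Analysis.Analysis" "HOL-Probability.Probability"
begin

definition outer :: "real^'d \<Rightarrow> real^'d \<Rightarrow> real^'d^'d" where
  "outer u v = (\<chi> i j. u $ i * v $ j)"

definition mat_expect :: "'a measure \<Rightarrow> ('a \<Rightarrow> real^'d^'d) \<Rightarrow> real^'d^'d" where
  "mat_expect M F = (\<chi> i j. integral\<^sup>L M (\<lambda>\<omega>. F \<omega> $ i $ j))"

definition psd :: "real^'d^'d \<Rightarrow> bool" where
  "psd A \<longleftrightarrow> (\<forall>v. 0 \<le> v \<bullet> (A *v v))"

definition loewner_le :: "real^'d^'d \<Rightarrow> real^'d^'d \<Rightarrow> bool" where
  "loewner_le A B \<longleftrightarrow> psd (B - A)"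

definition indep_rv :: "'a measure \<Rightarrow> ('a \<Rightarrow> 'b::topological_space) \<Rightarrow> ('a \<Rightarrow> 'c::topological_space) \<Rightarrow> bool" where
  "indep_rv M U V \<longleftrightarrow>
     (\<forall>A \<in> sets borel. \<forall>B \<in> sets borel.
        measure M (U -` A \<inter> V -` B \<inter> space M) = measure M (U -` A \<inter> space M) * measure M (V -` B \<inter> space M))"

end

theory Submission
  imports Defs
begin

lemma indep_rv_imp:
  fixes X :: "'a \<Rightarrow> real^'d" and e :: "'a \<Rightarrow> real"
    and f :: "real^'d \<Rightarrow> real" and g :: "real \<Rightarrow> real"
  assumes P: "prob_space M" and Xm: "X \<in> borel_measurable M" and em: "e \<in> borel_measurable M"
    and I: "indep_rv M X e" and fm: "f \<in> borel_measurable borel" and gm: "g \<in> borel_measurable borel"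
  shows "prob_space.indep_var M borel (\<lambda>\<omega>. f (X \<omega>)) borel (\<lambda>\<omega>. g (e \<omega>))"
proof -
  interpret prob_space M by (rule P)
  have fXm: "(\<lambda>\<omega>. f (X \<omega>)) \<in> borel_measurable M" using fm Xm by measurable
  have gem: "(\<lambda>\<omega>. g (e \<omega>)) \<in> borel_measurable M" using gm em by measurable
  let ?A = "{(\<lambda>\<omega>. f (X \<omega>)) -` A \<inter> space M | A. A \<in> sets (borel :: real measure)}"
  let ?B = "{(\<lambda>\<omega>. g (e \<omega>)) -` A \<inter> space M | A. A \<in> sets (borel :: real measure)}"
  have st1: "Int_stable ?A"
    unfolding Int_stable_def by clarify (rule_tac x="A \<inter> Aa" in exI, auto)
  have st2: "Int_stable ?B"
    unfolding Int_stable_def by clarify (rule_tac x="A \<inter> Aa" in exI, auto)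
  have "indep_set ?A ?B"
    unfolding indep_sets2_eq
  proof (intro conjI ballI)
    show "?A \<subseteq> events" using fXm by auto
    show "?B \<subseteq> events" using gem by auto
    fix a b assume "a \<in> ?A" "b \<in> ?B"
    then obtain A B where AB: "A \<in> sets borel" "B \<in> sets borel" "a = (\<lambda>\<omega>. f (X \<omega>)) -` A \<inter> space M" "b = (\<lambda>\<omega>. g (e \<omega>)) -` B \<inter> space M" by auto
    have fA: "f -` A \<in> sets borel" using measurable_sets[OF fm AB(1)] by simp
    have gB: "g -` B \<in> sets borel" using measurable_sets[OF gm AB(2)] by simp
    have "a \<inter> b = X -` (f -` A) \<inter> e -` (g -` B) \<inter> space M" using AB by auto
    moreover have "a = X -` (f -` A) \<inter> space M" "b = e -` (g -` B) \<inter> space M" using AB by auto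
    ultimately show "prob (a \<inter> b) = prob a * prob b" using I fA gB unfolding indep_rv_def by simp
  qed
  then have "indep_set (sigma_sets (space M) ?A) (sigma_sets (space M) ?B)"
    by (rule indep_set_sigma_sets[OF _ st1 st2])
  then show ?thesis unfolding indep_var_eq using fXm gem by simp
qed



lemma outer_mult: "outer a b *v c = (b \<bullet> c) *\<^sub>R (a :: real^'d)"
  by (simp add: vec_eq_iff outer_def matrix_vector_mult_def inner_vec_def sum_distrib_left mult_ac)

lemma qf_outer: "v \<bullet> (outer a a *v v) = (v \<bullet> (a :: real^'d))\<^sup>2"
  by (simp add: outer_mult power2_eq_square inner_commute)

lemma sum_mat_vec: "finite I \<Longrightarrow> (\<Sum>i\<in>I. A i) *v (v :: real^'d) = (\<Sum>i\<in>I. A i *v v)"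
  by (induction I rule: finite_induct) (auto simp: matrix_vector_mult_add_rdistrib)

lemma qf_expand: "v \<bullet> (A *v v) = (\<Sum>j\<in>UNIV. \<Sum>k\<in>UNIV. v$j * A$j$k * v$k)"
  for v :: "real^'d"
  by (simp add: inner_vec_def matrix_vector_mult_def sum_distrib_left mult_ac)

lemma trace_outer: "trace (H ** (c *\<^sub>R (\<Sum>i\<in>I. outer (a i) (a i)))) = c * (\<Sum>i\<in>I. a i \<bullet> (H *v a i))"
  for H :: "real^'d^'d"
proof -
  have "trace (H ** (c *\<^sub>R (\<Sum>i\<in>I. outer (a i) (a i)))) =
     (\<Sum>x\<in>UNIV. \<Sum>k\<in>UNIV. \<Sum>n\<in>I. c * (H $ x $ k * a n $ k * a n $ x))"
    by (simp add: trace_def matrix_matrix_mult_def outer_def sum_component sum_distrib_left mult_ac)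
  also have "\<dots> = (\<Sum>x\<in>UNIV. \<Sum>n\<in>I. \<Sum>k\<in>UNIV. c * (H $ x $ k * a n $ k * a n $ x))"
    by (rule sum.cong[OF refl], rule sum.swap)
  also have "\<dots> = (\<Sum>n\<in>I. \<Sum>x\<in>UNIV. \<Sum>k\<in>UNIV. c * (H $ x $ k * a n $ k * a n $ x))"
    by (rule sum.swap)
  also have "\<dots> = c * (\<Sum>i\<in>I. a i \<bullet> (H *v a i))"
    by (simp add: inner_vec_def matrix_vector_mult_def sum_distrib_left mult_ac)
  finally show ?thesis .
qed

lemma mat_expect_qf:
  assumes "\<And>j k. integrable M (\<lambda>\<omega>. F \<omega> $ j $ k)"
  shows "v \<bullet> (mat_expect M F *v v) = integral\<^sup>L M (\<lambda>\<omega>. v \<bullet> (F \<omega> *v (v :: real^'d)))"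
  unfolding qf_expand mat_expect_def
  using assms by (simp add: integral_sum integrable_sum)



lemma r1: "(t::real)^2 \<le> 1 + t^4"
proof -
  have "0 \<le> (t^2 - 1)^2" by simp
  then have "2*t^2 \<le> 1 + t^4" by (simp add: power2_eq_square power4_eq_xxxx algebra_simps)
  moreover have "0 \<le> t^2" by simp
  ultimately show ?thesis by linarith
qed
lemma r2: "0 \<le> (p::real) \<Longrightarrow> 0 \<le> q \<Longrightarrow> p*q \<le> p^2+q^2"
proof -
  assume "0 \<le> p" "0 \<le> q"
  have "0 \<le> (p - q)^2" by simp
  then have "2*p*q \<le> p^2+q^2" by (simp add: power2_eq_square algebra_simps)
  moreover have "0 \<le> p*q" using \<open>0 \<le> p\<close> \<open>0 \<le> q\<close> by simp
  ultimately show ?thesis by linarith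
qed

context
  fixes M :: "'s measure" and X :: "'s \<Rightarrow> real^'d"
  assumes P: "prob_space M" and Xm[measurable]: "X \<in> borel_measurable M"
    and F4: "\<And>z. integrable M (\<lambda>\<omega>. (z \<bullet> X \<omega>) ^ 4)"
begin

lemma int_sq: "integrable M (\<lambda>\<omega>. (z \<bullet> X \<omega>)\<^sup>2)"
proof -
  interpret prob_space M by (rule P)
  show ?thesis
  proof (rule Bochner_Integration.integrable_bound[where f="\<lambda>\<omega>. 1 + (z \<bullet> X \<omega>) ^ 4"])
    show "integrable M (\<lambda>\<omega>. 1 + (z \<bullet> X \<omega>) ^ 4)" using F4 by simp
    show "(\<lambda>\<omega>. (z \<bullet> X \<omega>)\<^sup>2) \<in> borel_measurable M" by measurable
    show "AE \<omega> in M. norm ((z \<bullet> X \<omega>)\<^sup>2) \<le> norm (1 + (z \<bullet> X \<omega>) ^ 4)"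
    proof (rule AE_I2)
      fix \<omega> 
      have "0 \<le> (z \<bullet> X \<omega>)^4" by simp
      then show "norm ((z \<bullet> X \<omega>)\<^sup>2) \<le> norm (1 + (z \<bullet> X \<omega>) ^ 4)"
        using r1[of "z \<bullet> X \<omega>"] by simp
    qed
  qed
qed

lemma int_prod2: "integrable M (\<lambda>\<omega>. (a \<bullet> X \<omega>) * (b \<bullet> X \<omega>))"
proof -
  have eq: "(\<lambda>\<omega>. (a \<bullet> X \<omega>) * (b \<bullet> X \<omega>)) = (\<lambda>\<omega>. (((a+b) \<bullet> X \<omega>)\<^sup>2 - ((a-b) \<bullet> X \<omega>)\<^sup>2) / 4)"
    by (simp add: inner_add_left inner_diff_left power2_eq_square algebra_simps)
  show ?thesis unfolding eq by (intro Bochner_Integration.integrable_divide Bochner_Integration.integrable_diff int_sq)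
qed

lemma int_sqsq: "integrable M (\<lambda>\<omega>. (a \<bullet> X \<omega>)\<^sup>2 * (b \<bullet> X \<omega>)\<^sup>2)"
proof (rule Bochner_Integration.integrable_bound[where f="\<lambda>\<omega>. (a \<bullet> X \<omega>) ^ 4 + (b \<bullet> X \<omega>) ^ 4"])
  show "integrable M (\<lambda>\<omega>. (a \<bullet> X \<omega>) ^ 4 + (b \<bullet> X \<omega>) ^ 4)" using F4 by simp
  show "(\<lambda>\<omega>. (a \<bullet> X \<omega>)\<^sup>2 * (b \<bullet> X \<omega>)\<^sup>2) \<in> borel_measurable M" by measurable
  show "AE \<omega> in M. norm ((a \<bullet> X \<omega>)\<^sup>2 * (b \<bullet> X \<omega>)\<^sup>2) \<le> norm ((a \<bullet> X \<omega>) ^ 4 + (b \<bullet> X \<omega>) ^ 4)"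
  proof (rule AE_I2)
    fix \<omega>
    define p where "p = (a \<bullet> X \<omega>)\<^sup>2"
    define q where "q = (b \<bullet> X \<omega>)\<^sup>2"
    have p: "p \<ge> 0" "q \<ge> 0" unfolding p_def q_def by simp_all
    have "p * q \<le> p\<^sup>2 + q\<^sup>2" using p by (rule r2)
    moreover have "(a \<bullet> X \<omega>) ^ 4 = p\<^sup>2" "(b \<bullet> X \<omega>) ^ 4 = q\<^sup>2" unfolding p_def q_def by (simp_all flip: power_mult)
    ultimately show "norm ((a \<bullet> X \<omega>)\<^sup>2 * (b \<bullet> X \<omega>)\<^sup>2) \<le> norm ((a \<bullet> X \<omega>) ^ 4 + (b \<bullet> X \<omega>) ^ 4)"
      using p unfolding p_def[symmetric] q_def[symmetric] by simp
  qed
qed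

lemma int_sq_prod2: "integrable M (\<lambda>\<omega>. (a \<bullet> X \<omega>)\<^sup>2 * ((b \<bullet> X \<omega>) * (c \<bullet> X \<omega>)))"
proof -
  have eq: "(\<lambda>\<omega>. (a \<bullet> X \<omega>)\<^sup>2 * ((b \<bullet> X \<omega>) * (c \<bullet> X \<omega>))) =
     (\<lambda>\<omega>. ((a \<bullet> X \<omega>)\<^sup>2 * ((b+c) \<bullet> X \<omega>)\<^sup>2 - (a \<bullet> X \<omega>)\<^sup>2 * ((b-c) \<bullet> X \<omega>)\<^sup>2) / 4)"
    by (simp add: inner_add_left inner_diff_left power2_eq_square algebra_simps)
  show ?thesis unfolding eq by (intro Bochner_Integration.integrable_divide Bochner_Integration.integrable_diff int_sqsq)
qed

lemma int_cube: "integrable M (\<lambda>\<omega>. (a \<bullet> X \<omega>) * (b \<bullet> X \<omega>)\<^sup>2)"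
proof (rule Bochner_Integration.integrable_bound[where f="\<lambda>\<omega>. (a \<bullet> X \<omega>)\<^sup>2 + (b \<bullet> X \<omega>) ^ 4"])
  show "integrable M (\<lambda>\<omega>. (a \<bullet> X \<omega>)\<^sup>2 + (b \<bullet> X \<omega>) ^ 4)" using F4 int_sq by simp
  show "(\<lambda>\<omega>. (a \<bullet> X \<omega>) * (b \<bullet> X \<omega>)\<^sup>2) \<in> borel_measurable M" by measurable
  show "AE \<omega> in M. norm ((a \<bullet> X \<omega>) * (b \<bullet> X \<omega>)\<^sup>2) \<le> norm ((a \<bullet> X \<omega>)\<^sup>2 + (b \<bullet> X \<omega>) ^ 4)"
  proof (rule AE_I2)
    fix \<omega>
    define p where "p = \<bar>a \<bullet> X \<omega>\<bar>"
    define q where "q = (b \<bullet> X \<omega>)\<^sup>2"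
    have p: "p \<ge> 0" "q \<ge> 0" unfolding p_def q_def by simp_all
    have "p * q \<le> p\<^sup>2 + q\<^sup>2" using p by (rule r2)
    moreover have "(a \<bullet> X \<omega>)\<^sup>2 = p\<^sup>2" "(b \<bullet> X \<omega>) ^ 4 = q\<^sup>2" unfolding p_def q_def by (simp_all flip: power_mult)
    moreover have "norm ((a \<bullet> X \<omega>) * (b \<bullet> X \<omega>)\<^sup>2) = p * q" unfolding p_def q_def by (simp add: abs_mult)
    ultimately show "norm ((a \<bullet> X \<omega>) * (b \<bullet> X \<omega>)\<^sup>2) \<le> norm ((a \<bullet> X \<omega>)\<^sup>2 + (b \<bullet> X \<omega>) ^ 4)"
      using p by simp
  qed
qed

lemma int_prod3: "integrable M (\<lambda>\<omega>. (a \<bullet> X \<omega>) * ((b \<bullet> X \<omega>) * (c \<bullet> X \<omega>)))"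
proof -
  have eq: "(\<lambda>\<omega>. (a \<bullet> X \<omega>) * ((b \<bullet> X \<omega>) * (c \<bullet> X \<omega>))) =
     (\<lambda>\<omega>. ((a \<bullet> X \<omega>) * ((b+c) \<bullet> X \<omega>)\<^sup>2 - (a \<bullet> X \<omega>) * ((b-c) \<bullet> X \<omega>)\<^sup>2) / 4)"
    by (simp add: inner_add_left inner_diff_left power2_eq_square algebra_simps)
  show ?thesis unfolding eq by (intro Bochner_Integration.integrable_divide Bochner_Integration.integrable_diff int_cube)
qed

end



lemma r3: "0 < (t::real) \<Longrightarrow> a^2 * b^2 \<le> (t * a^4 + b^4 / t) / 2"
proof -
  assume t: "0 < t"
  have "0 \<le> (t * a^2 - b^2)^2" by simp
  then have "2 * t * (a^2 * b^2) \<le> t^2 * a^4 + b^4"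
    by (simp add: power2_eq_square power4_eq_xxxx algebra_simps)
  moreover have eq: "(t * a^4 + b^4 / t) / 2 = (t^2*a^4 + b^4) / (2*t)" using t by (simp add: field_simps power2_eq_square)
  ultimately show ?thesis using t by (simp add: le_divide_eq mult_ac)
qed

lemma cs_aux:
  fixes m k \<alpha> \<beta> :: real
  assumes H: "\<And>t. t > 0 \<Longrightarrow> m \<le> (t * (k * \<alpha>^2) + k * \<beta>^2 / t) / 2"
    and a: "0 \<le> \<alpha>" and b: "0 \<le> \<beta>" and k: "0 < k"
  shows "m \<le> k * \<alpha> * \<beta>"
proof (cases "\<alpha> > 0 \<and> \<beta> > 0")
  case True
  have "m \<le> ((\<beta>/\<alpha>) * (k * \<alpha>^2) + k * \<beta>^2 / (\<beta>/\<alpha>)) / 2" by (rule H) (use True in simp)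
  also have "(\<beta>/\<alpha>) * (k * \<alpha>^2) = k * \<alpha> * \<beta>" using True by (simp add: power2_eq_square)
  also have "k * \<beta>^2 / (\<beta>/\<alpha>) = k * \<alpha> * \<beta>" using True by (simp add: power2_eq_square)
  also have "(k * \<alpha> * \<beta> + k * \<alpha> * \<beta>) / 2 = k * \<alpha> * \<beta>" by simp
  finally show ?thesis .
next
  case False
  then have z: "\<alpha> = 0 \<or> \<beta> = 0" using a b by auto
  show ?thesis
  proof (rule ccontr)
    assume "\<not> ?thesis"
    then have m: "m > 0" using z by auto
    show False
    proof (cases "\<alpha> = 0")
      case True
      define t where "t = (k * \<beta>^2 + 1) / m"
      have t: "t > 0" unfolding t_def using m k by (simp add: add_nonneg_pos)
      have "m \<le> (k * \<beta>^2 / t) / 2" using H[OF t] True by simp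
      also have "\<dots> = (k * \<beta>^2 * m / (k * \<beta>^2 + 1)) / 2" unfolding t_def by simp
      also have "\<dots> < m"
      proof -
        have p: "k * \<beta>^2 + 1 > 0" using k by (simp add: add_nonneg_pos)
        have "k * \<beta>^2 * m / (k * \<beta>^2 + 1) \<le> m" using p m by (simp add: divide_le_eq)
        moreover have "\<And>x::real. x \<le> m \<Longrightarrow> x / 2 < m" using m by linarith
        ultimately show ?thesis by blast
      qed
      finally show False by simp
    next
      case False
      then have B: "\<beta> = 0" using z by simp
      define t where "t = m / (k * \<alpha>^2 + 1)"
      have p: "k * \<alpha>^2 + 1 > 0" using k by (simp add: add_nonneg_pos)
      have t: "t > 0" unfolding t_def using m p by simp
      have "m \<le> (t * (k * \<alpha>^2)) / 2" using H[OF t] B by simp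
      also have "t * (k * \<alpha>^2) \<le> m" unfolding t_def using p m by (simp add: field_simps)
      then have "(t * (k * \<alpha>^2)) / 2 < m" using m by simp
      finally show False by simp
    qed
  qed
qed

lemma client_bound:
  fixes M :: "'s measure" and X :: "'s \<Rightarrow> real^'d" and e :: "'s \<Rightarrow> real"
    and H :: "real^'d^'d" and u v :: "real^'d" and \<kappa> \<sigma> :: real
  assumes P: "prob_space M" and Xm[measurable]: "X \<in> borel_measurable M"
    and em[measurable]: "e \<in> borel_measurable M"
    and I: "indep_rv M X e"
    and HX: "mat_expect M (\<lambda>\<omega>. outer (X \<omega>) (X \<omega>)) = H"
    and e2: "integrable M (\<lambda>\<omega>. (e \<omega>)\<^sup>2)"
    and e0: "integral\<^sup>L M e = 0"
    and ev: "integral\<^sup>L M (\<lambda>\<omega>. (e \<omega>)\<^sup>2) = \<sigma>\<^sup>2"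
    and k: "\<kappa> > 0"
    and F4: "\<And>z. integrable M (\<lambda>\<omega>. (z \<bullet> X \<omega>) ^ 4)"
    and F4b: "\<And>z. integral\<^sup>L M (\<lambda>\<omega>. (z \<bullet> X \<omega>) ^ 4) \<le> \<kappa> * (z \<bullet> (H *v z))\<^sup>2"
  shows "v \<bullet> (mat_expect M (\<lambda>\<omega>. outer (outer (X \<omega>) (X \<omega>) *v u + e \<omega> *\<^sub>R X \<omega>)
                                         (outer (X \<omega>) (X \<omega>) *v u + e \<omega> *\<^sub>R X \<omega>)) *v v)
         \<le> \<kappa> * (v \<bullet> (H *v v)) * (u \<bullet> (H *v u)) + \<sigma>\<^sup>2 * (v \<bullet> (H *v v))"
proof -
  interpret prob_space M by (rule P)
  have e1: "integrable M e" by (rule square_integrable_imp_integrable[OF em e2])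
  have ind: "integrable M (\<lambda>\<omega>. f (X \<omega>) * g (e \<omega>)) \<and>
      integral\<^sup>L M (\<lambda>\<omega>. f (X \<omega>) * g (e \<omega>)) = integral\<^sup>L M (\<lambda>\<omega>. f (X \<omega>)) * integral\<^sup>L M (\<lambda>\<omega>. g (e \<omega>))"
    if "f \<in> borel_measurable borel" "g \<in> borel_measurable borel"
       "integrable M (\<lambda>\<omega>. f (X \<omega>))" "integrable M (\<lambda>\<omega>. g (e \<omega>))" for f :: "real^'d \<Rightarrow> real" and g :: "real \<Rightarrow> real"
  proof -
    have iv: "indep_var borel (\<lambda>\<omega>. f (X \<omega>)) borel (\<lambda>\<omega>. g (e \<omega>))"
      by (rule indep_rv_imp[OF P Xm em I that(1,2)])
    show ?thesis using indep_var_integrable[OF iv that(3,4)] indep_var_lebesgue_integral[OF iv that(3,4)] by simp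
  qed
  have ax: "\<And>j (x::real^'d). x $ j = axis j 1 \<bullet> x" by (simp add: inner_axis')
  define g where "g \<omega> = outer (X \<omega>) (X \<omega>) *v u + e \<omega> *\<^sub>R X \<omega>" for \<omega>
  have gf: "g \<omega> = (u \<bullet> X \<omega> + e \<omega>) *\<^sub>R X \<omega>" for \<omega>
    unfolding g_def by (simp add: outer_mult scaleR_add_left inner_commute)
  have ent: "integrable M (\<lambda>\<omega>. outer (g \<omega>) (g \<omega>) $ j $ k)" for j k
  proof -
    let ?a = "axis j (1::real) :: real^'d" and ?b = "axis k (1::real) :: real^'d"
    have eq: "(\<lambda>\<omega>. outer (g \<omega>) (g \<omega>) $ j $ k) = (\<lambda>\<omega>.
        (u \<bullet> X \<omega>)\<^sup>2 * ((?a \<bullet> X \<omega>) * (?b \<bullet> X \<omega>))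
        + (2 * ((u \<bullet> X \<omega>) * ((?a \<bullet> X \<omega>) * (?b \<bullet> X \<omega>)))) * e \<omega>
        + ((?a \<bullet> X \<omega>) * (?b \<bullet> X \<omega>)) * (e \<omega>)\<^sup>2)"
      by (rule ext) (simp add: outer_def gf inner_axis' power2_eq_square algebra_simps)
    have i1: "integrable M (\<lambda>\<omega>. (u \<bullet> X \<omega>)\<^sup>2 * ((?a \<bullet> X \<omega>) * (?b \<bullet> X \<omega>)))"
      by (rule int_sq_prod2[OF P Xm F4])
    have i2: "integrable M (\<lambda>\<omega>. (2 * ((u \<bullet> X \<omega>) * ((?a \<bullet> X \<omega>) * (?b \<bullet> X \<omega>)))) * e \<omega>)"
      by (rule conjunct1[OF ind[of "\<lambda>x. 2 * ((u \<bullet> x) * ((?a \<bullet> x) * (?b \<bullet> x)))" "\<lambda>t. t", OF _ _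
        Bochner_Integration.integrable_mult_right[OF int_prod3[OF P Xm F4, of u ?a ?b]] e1]]) (intro borel_measurable_continuous_onI continuous_intros)+
    have i3: "integrable M (\<lambda>\<omega>. ((?a \<bullet> X \<omega>) * (?b \<bullet> X \<omega>)) * (e \<omega>)\<^sup>2)"
      by (rule conjunct1[OF ind[of "\<lambda>x. (?a \<bullet> x) * (?b \<bullet> x)" "\<lambda>t. t\<^sup>2", OF _ _
        int_prod2[OF P Xm F4, of ?a ?b] e2]]) (intro borel_measurable_continuous_onI continuous_intros)+
    show ?thesis unfolding eq using i1 i2 i3 by simp
  qed
  have entX: "integrable M (\<lambda>\<omega>. outer (X \<omega>) (X \<omega>) $ j $ k)" for j k
    using int_prod2[OF P Xm F4, of "axis j 1" "axis k 1"] by (simp add: outer_def inner_axis')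
  define \<alpha> where "\<alpha> = v \<bullet> (H *v v)"
  define \<beta> where "\<beta> = u \<bullet> (H *v u)"
  have alpha: "\<alpha> = integral\<^sup>L M (\<lambda>\<omega>. (v \<bullet> X \<omega>)\<^sup>2)"
    unfolding \<alpha>_def HX[symmetric] mat_expect_qf[OF entX] qf_outer by simp
  have beta: "\<beta> = integral\<^sup>L M (\<lambda>\<omega>. (u \<bullet> X \<omega>)\<^sup>2)"
    unfolding \<beta>_def HX[symmetric] mat_expect_qf[OF entX] qf_outer by simp
  have a0: "\<alpha> \<ge> 0" unfolding alpha by simp
  have b0: "\<beta> \<ge> 0" unfolding beta by simp
  have "v \<bullet> (mat_expect M (\<lambda>\<omega>. outer (g \<omega>) (g \<omega>)) *v v) = integral\<^sup>L M (\<lambda>\<omega>. (v \<bullet> g \<omega>)\<^sup>2)"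
    unfolding mat_expect_qf[OF ent] qf_outer by simp
  also have "(\<lambda>\<omega>. (v \<bullet> g \<omega>)\<^sup>2) = (\<lambda>\<omega>. (v \<bullet> X \<omega>)\<^sup>2 * (u \<bullet> X \<omega>)\<^sup>2
        + (2 * ((u \<bullet> X \<omega>) * (v \<bullet> X \<omega>)\<^sup>2)) * e \<omega> + (v \<bullet> X \<omega>)\<^sup>2 * (e \<omega>)\<^sup>2)"
    by (rule ext) (simp add: gf power2_eq_square algebra_simps)
  also have "integral\<^sup>L M \<dots> = integral\<^sup>L M (\<lambda>\<omega>. (v \<bullet> X \<omega>)\<^sup>2 * (u \<bullet> X \<omega>)\<^sup>2) + \<alpha> * \<sigma>\<^sup>2"
  proof -
    have i1: "integrable M (\<lambda>\<omega>. (v \<bullet> X \<omega>)\<^sup>2 * (u \<bullet> X \<omega>)\<^sup>2)"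
      by (rule int_sqsq[OF P Xm F4])
    have i2: "integrable M (\<lambda>\<omega>. (2 * ((u \<bullet> X \<omega>) * (v \<bullet> X \<omega>)\<^sup>2)) * e \<omega>) \<and>
       integral\<^sup>L M (\<lambda>\<omega>. (2 * ((u \<bullet> X \<omega>) * (v \<bullet> X \<omega>)\<^sup>2)) * e \<omega>) = 0"
    proof -
      have "integrable M (\<lambda>\<omega>. (2 * ((u \<bullet> X \<omega>) * (v \<bullet> X \<omega>)\<^sup>2)) * e \<omega>) \<and>
       integral\<^sup>L M (\<lambda>\<omega>. (2 * ((u \<bullet> X \<omega>) * (v \<bullet> X \<omega>)\<^sup>2)) * e \<omega>) =
       integral\<^sup>L M (\<lambda>\<omega>. (2 * ((u \<bullet> X \<omega>) * (v \<bullet> X \<omega>)\<^sup>2))) * integral\<^sup>L M e"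
        by (rule ind[of "\<lambda>x. 2 * ((u \<bullet> x) * (v \<bullet> x)\<^sup>2)" "\<lambda>t. t", OF _ _
          Bochner_Integration.integrable_mult_right[OF int_cube[OF P Xm F4, of u v]] e1]) (intro borel_measurable_continuous_onI continuous_intros)+
      then show ?thesis using e0 by simp
    qed
    have i3: "integrable M (\<lambda>\<omega>. (v \<bullet> X \<omega>)\<^sup>2 * (e \<omega>)\<^sup>2) \<and>
       integral\<^sup>L M (\<lambda>\<omega>. (v \<bullet> X \<omega>)\<^sup>2 * (e \<omega>)\<^sup>2) = \<alpha> * \<sigma>\<^sup>2"
    proof -
      have "integrable M (\<lambda>\<omega>. (v \<bullet> X \<omega>)\<^sup>2 * (e \<omega>)\<^sup>2) \<and>
       integral\<^sup>L M (\<lambda>\<omega>. (v \<bullet> X \<omega>)\<^sup>2 * (e \<omega>)\<^sup>2) =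
       integral\<^sup>L M (\<lambda>\<omega>. (v \<bullet> X \<omega>)\<^sup>2) * integral\<^sup>L M (\<lambda>\<omega>. (e \<omega>)\<^sup>2)"
        by (rule ind[of "\<lambda>x. (v \<bullet> x)\<^sup>2" "\<lambda>t. t\<^sup>2", OF _ _ int_sq[OF P Xm F4, of v] e2]) (intro borel_measurable_continuous_onI continuous_intros)+
      then show ?thesis using ev alpha by simp
    qed
    show ?thesis using i1 i2 i3 by simp
  qed
  also have "integral\<^sup>L M (\<lambda>\<omega>. (v \<bullet> X \<omega>)\<^sup>2 * (u \<bullet> X \<omega>)\<^sup>2) \<le> \<kappa> * \<alpha> * \<beta>"
  proof (rule cs_aux[OF _ a0 b0 k])
    fix t :: real assume t: "t > 0"
    have "integral\<^sup>L M (\<lambda>\<omega>. (v \<bullet> X \<omega>)\<^sup>2 * (u \<bullet> X \<omega>)\<^sup>2)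
        \<le> integral\<^sup>L M (\<lambda>\<omega>. (t * (v \<bullet> X \<omega>)^4 + (u \<bullet> X \<omega>)^4 / t) / 2)"
    proof (rule integral_mono[OF int_sqsq[OF P Xm F4]])
      show "integrable M (\<lambda>\<omega>. (t * (v \<bullet> X \<omega>)^4 + (u \<bullet> X \<omega>)^4 / t) / 2)"
        by (intro Bochner_Integration.integrable_divide Bochner_Integration.integrable_add
              Bochner_Integration.integrable_mult_right F4)
      show "(v \<bullet> X \<omega>)\<^sup>2 * (u \<bullet> X \<omega>)\<^sup>2 \<le> (t * (v \<bullet> X \<omega>)^4 + (u \<bullet> X \<omega>)^4 / t) / 2" for \<omega>
        by (rule r3[OF t])
    qed
    also have "\<dots> = (t * integral\<^sup>L M (\<lambda>\<omega>. (v \<bullet> X \<omega>)^4) + integral\<^sup>L M (\<lambda>\<omega>. (u \<bullet> X \<omega>)^4) / t) / 2"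
      using F4 by (simp add: Bochner_Integration.integral_add)
    also have "\<dots> \<le> (t * (\<kappa> * \<alpha>\<^sup>2) + \<kappa> * \<beta>\<^sup>2 / t) / 2"
    proof -
      have h1: "t * integral\<^sup>L M (\<lambda>\<omega>. (v \<bullet> X \<omega>)^4) \<le> t * (\<kappa> * \<alpha>\<^sup>2)"
        using F4b[of v] t unfolding \<alpha>_def by simp
      have h2: "integral\<^sup>L M (\<lambda>\<omega>. (u \<bullet> X \<omega>)^4) / t \<le> \<kappa> * \<beta>\<^sup>2 / t"
        using F4b[of u] t unfolding \<beta>_def by (simp add: divide_right_mono)
      show ?thesis using divide_right_mono[OF add_mono[OF h1 h2], of 2] by simp
    qed
    finally show "integral\<^sup>L M (\<lambda>\<omega>. (v \<bullet> X \<omega>)\<^sup>2 * (u \<bullet> X \<omega>)\<^sup>2) \<le> (t * (\<kappa> * \<alpha>\<^sup>2) + \<kappa> * \<beta>\<^sup>2 / t) / 2" .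
  qed
  finally show ?thesis unfolding g_def \<alpha>_def \<beta>_def by (simp add: mult_ac)
qed



theorem proposition5:
  fixes N :: nat
    and M :: "nat \<Rightarrow> 'a measure"
    and X :: "nat \<Rightarrow> 'a \<Rightarrow> real^'d"
    and eps :: "nat \<Rightarrow> 'a \<Rightarrow> real"
    and H :: "real^'d^'d"
    and \<sigma> \<kappa> :: real
    and w :: "nat \<Rightarrow> real^'d"
  assumes N: "N \<ge> 1"
    and prob: "\<And>i. i \<in> {1..N} \<Longrightarrow> prob_space (M i)"
    and X_meas: "\<And>i. i \<in> {1..N} \<Longrightarrow> X i \<in> borel_measurable (M i)"
    and eps_meas: "\<And>i. i \<in> {1..N} \<Longrightarrow> eps i \<in> borel_measurable (M i)"
    and indep: "\<And>i. i \<in> {1..N} \<Longrightarrow> indep_rv (M i) (X i) (eps i)"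
    and H: "\<And>i. i \<in> {1..N} \<Longrightarrow> mat_expect (M i) (\<lambda>\<omega>. outer (X i \<omega>) (X i \<omega>)) = H"
    and eps_sq_int: "\<And>i. i \<in> {1..N} \<Longrightarrow> integrable (M i) (\<lambda>\<omega>. (eps i \<omega>)\<^sup>2)"
    and eps_mean: "\<And>i. i \<in> {1..N} \<Longrightarrow> integral\<^sup>L (M i) (eps i) = 0"
    and eps_var: "\<And>i. i \<in> {1..N} \<Longrightarrow> integral\<^sup>L (M i) (\<lambda>\<omega>. (eps i \<omega>)\<^sup>2) = \<sigma>\<^sup>2"
    and kappa_pos: "\<kappa> > 0"
    and fourth_int: "\<And>i z. i \<in> {1..N} \<Longrightarrow> integrable (M i) (\<lambda>\<omega>. (z \<bullet> X i \<omega>) ^ 4)"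
    and fourth: "\<And>i z. i \<in> {1..N} \<Longrightarrow>
        integral\<^sup>L (M i) (\<lambda>\<omega>. (z \<bullet> X i \<omega>) ^ 4) \<le> \<kappa> * (z \<bullet> (H *v z))\<^sup>2"
  shows "let wstar = (1 / real N) *\<^sub>R (\<Sum>i=1..N. w i);
             g = (\<lambda>i \<omega>. outer (X i \<omega>) (X i \<omega>) *v (wstar - w i) + eps i \<omega> *\<^sub>R X i \<omega>);
             \<Theta> = (\<lambda>i. mat_expect (M i) (\<lambda>\<omega>. outer (g i \<omega>) (g i \<omega>)));
             CovW = (1 / real N) *\<^sub>R (\<Sum>i=1..N. outer (wstar - w i) (wstar - w i))
         in loewner_le ((1 / real N) *\<^sub>R (\<Sum>i=1..N. \<Theta> i))
                       ((\<kappa> * trace (H ** CovW) + \<sigma>\<^sup>2) *\<^sub>R H)"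
proof -
  define ws where "ws = (1 / real N) *\<^sub>R (\<Sum>i=1..N. w i)"
  define \<Theta> where "\<Theta> i = mat_expect (M i) (\<lambda>\<omega>. outer (outer (X i \<omega>) (X i \<omega>) *v (ws - w i) + eps i \<omega> *\<^sub>R X i \<omega>)
       (outer (X i \<omega>) (X i \<omega>) *v (ws - w i) + eps i \<omega> *\<^sub>R X i \<omega>))" for i
  have main: "loewner_le ((1 / real N) *\<^sub>R (\<Sum>i=1..N. \<Theta> i))
      ((\<kappa> * trace (H ** ((1 / real N) *\<^sub>R (\<Sum>i=1..N. outer (ws - w i) (ws - w i)))) + \<sigma>\<^sup>2) *\<^sub>R H)"
    unfolding loewner_le_def psd_def
  proof
    fix v :: "real^'d"
    define \<alpha> where "\<alpha> = v \<bullet> (H *v v)"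
    define \<beta> where "\<beta> i = (ws - w i) \<bullet> (H *v (ws - w i))" for i
    have tr: "trace (H ** ((1 / real N) *\<^sub>R (\<Sum>i=1..N. outer (ws - w i) (ws - w i)))) = (1 / real N) * (\<Sum>i=1..N. \<beta> i)"
      unfolding \<beta>_def by (rule trace_outer)
    have bnd: "v \<bullet> (\<Theta> i *v v) \<le> \<kappa> * \<alpha> * \<beta> i + \<sigma>\<^sup>2 * \<alpha>" if i: "i \<in> {1..N}" for i
      unfolding \<Theta>_def \<alpha>_def \<beta>_def
      by (rule client_bound[OF prob[OF i] X_meas[OF i] eps_meas[OF i] indep[OF i] H[OF i]
            eps_sq_int[OF i] eps_mean[OF i] eps_var[OF i] kappa_pos fourth_int[OF i] fourth[OF i]])
    have lhs: "v \<bullet> (((1 / real N) *\<^sub>R (\<Sum>i=1..N. \<Theta> i)) *v v) = (1 / real N) * (\<Sum>i=1..N. v \<bullet> (\<Theta> i *v v))"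
      by (simp add: scaleR_matrix_vector_assoc[symmetric] sum_mat_vec inner_sum_right)
    have rhs: "v \<bullet> ((c *\<^sub>R H) *v v) = c * \<alpha>" for c
      unfolding \<alpha>_def by (simp add: scaleR_matrix_vector_assoc[symmetric])
    have "(\<Sum>i=1..N. v \<bullet> (\<Theta> i *v v)) \<le> (\<Sum>i=1..N. \<kappa> * \<alpha> * \<beta> i + \<sigma>\<^sup>2 * \<alpha>)"
      by (rule sum_mono) (rule bnd)
    also have "\<dots> = \<kappa> * \<alpha> * (\<Sum>i=1..N. \<beta> i) + real N * (\<sigma>\<^sup>2 * \<alpha>)"
      by (simp add: sum.distrib sum_distrib_left)
    finally have "(1 / real N) * (\<Sum>i=1..N. v \<bullet> (\<Theta> i *v v)) \<le> (1 / real N) * (\<kappa> * \<alpha> * (\<Sum>i=1..N. \<beta> i) + real N * (\<sigma>\<^sup>2 * \<alpha>))"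
      using N by (intro mult_left_mono) auto
    also have "\<dots> = (\<kappa> * ((1 / real N) * (\<Sum>i=1..N. \<beta> i)) + \<sigma>\<^sup>2) * \<alpha>"
      using N by (simp add: field_simps)
    finally show "0 \<le> v \<bullet> (((\<kappa> * trace (H ** ((1 / real N) *\<^sub>R (\<Sum>i=1..N. outer (ws - w i) (ws - w i)))) + \<sigma>\<^sup>2) *\<^sub>R H
        - (1 / real N) *\<^sub>R (\<Sum>i=1..N. \<Theta> i)) *v v)"
      unfolding matrix_vector_mult_diff_rdistrib inner_diff_right lhs rhs tr by simp
  qed
  show ?thesis unfolding Let_def ws_def[symmetric] \<Theta>_def[symmetric] using main by simp
qed


end
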